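(* The infinite word $u_\beta$ has affine factor complexity if and only if $u_\beta$ has no maximal left special factor.
   Context: $\beta>1$ is a simple Parry number with $d_\beta(1)=t_1\cdots t_m$, $m\ge2$, nonnegative integer digits, $t_1\ge1$, $t_m\ge1$, satisfying the Parry condition ($t_i\cdots t_m0^\omega$ lexicographically strictly smaller than $t_1\cdots t_m0^\omega$ for $2\le i\le m$). $\varphi$ is the substitution on $\mathcal A=\{0,\dots,m-1\}$ with $\varphi(k)=0^{t_{k+1}}(k+1)$ for $0\le k\le m-2$, $\varphi(m-1)=0^{t_m}$, and $u_\beta=\lim_n\varphi^n(0)$ is its fixed point. Affine factor complexity: the number $\mathcal C(n)$ of factors of length $n$ equals $an+b$ for all $n$. A factor $w$ is left special if at least two distinct letters $a$ make $aw$ a factor. A left special factor $w$ is maximal if for no letter $a\in\mathcal A$ is $wa$ a left special factor. *)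

theory Defs
  imports Main
begin

text \<open>Digits t = [t_1,...,t_m] of d_beta(1) (0-indexed list), padded with zeros.\<close>
definition tpad :: "nat list \<Rightarrow> nat \<Rightarrow> nat" where
  "tpad t j = (if j < length t then t ! j else 0)"

definition lex_less :: "(nat \<Rightarrow> nat) \<Rightarrow> (nat \<Rightarrow> nat) \<Rightarrow> bool" where
  "lex_less a b \<longleftrightarrow> (\<exists>k. (\<forall>j<k. a j = b j) \<and> a k < b k)"

definition simple_parry_digits :: "nat list \<Rightarrow> bool" where
  "simple_parry_digits t \<longleftrightarrow> length t \<ge> 2 \<and> t ! 0 \<ge> 1 \<and> last t \<ge> 1 \<and>
     (\<forall>i. 1 \<le> i \<and> i < length t \<longrightarrow> lex_less (\<lambda>j. tpad t (i + j)) (tpad t))"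

definition phi :: "nat list \<Rightarrow> nat \<Rightarrow> nat list" where
  "phi t k = (if k + 1 < length t then replicate (t ! k) 0 @ [k + 1]
              else replicate (t ! (length t - 1)) 0)"

definition phi_word :: "nat list \<Rightarrow> nat list \<Rightarrow> nat list" where
  "phi_word t w = concat (map (phi t) w)"

definition phi_iter :: "nat list \<Rightarrow> nat \<Rightarrow> nat list" where
  "phi_iter t n = (phi_word t ^^ n) [0]"

text \<open>The fixed point u_beta = lim phi^n(0): its i-th letter is the i-th letter of any
  phi^n(0) long enough (the first such n is used).\<close>
definition u_beta :: "nat list \<Rightarrow> nat \<Rightarrow> nat" where
  "u_beta t i = phi_iter t (LEAST n. i < length (phi_iter t n)) ! i"

definition factors :: "(nat \<Rightarrow> nat) \<Rightarrow> nat list set" where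
  "factors u = {w. \<exists>i. w = map u [i..<i + length w]}"

definition complexity :: "(nat \<Rightarrow> nat) \<Rightarrow> nat \<Rightarrow> nat" where
  "complexity u n = card {w \<in> factors u. length w = n}"

definition affine_complexity :: "(nat \<Rightarrow> nat) \<Rightarrow> bool" where
  "affine_complexity u \<longleftrightarrow> (\<exists>a b :: int. \<forall>n. int (complexity u n) = a * int n + b)"

definition left_special :: "(nat \<Rightarrow> nat) \<Rightarrow> nat list \<Rightarrow> bool" where
  "left_special u w \<longleftrightarrow> (\<exists>a b. a \<noteq> b \<and> a # w \<in> factors u \<and> b # w \<in> factors u)"

definition maximal_left_special :: "nat \<Rightarrow> (nat \<Rightarrow> nat) \<Rightarrow> nat list \<Rightarrow> bool" where
  "maximal_left_special m u w \<longleftrightarrow> left_special u w \<and> (\<forall>a<m. \<not> left_special u (w @ [a]))"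

end

theory Submission
  imports Defs
begin


locale pd =
  fixes t :: "nat list"
  assumes len2: "length t \<ge> 2" and t0: "t ! 0 \<ge> 1" and tlast: "t ! (length t - 1) \<ge> 1"
begin

abbreviation "m \<equiv> length t"
abbreviation "u \<equiv> u_beta t"

definition blen :: "nat \<Rightarrow> nat" where "blen k = length (phi t k)"
definition S :: "nat \<Rightarrow> nat" where "S i = (\<Sum>j<i. blen (u j))"
definition sg :: "nat \<Rightarrow> nat" where "sg k = (if k + 1 < m then k + 1 else 0)"

lemma phi_lt: "k + 1 < m \<Longrightarrow> phi t k = replicate (t ! k) 0 @ [k + 1]"
  by (simp add: phi_def)
lemma phi_last: "\<not> k + 1 < m \<Longrightarrow> phi t k = replicate (t ! (m - 1)) 0"
  by (simp add: phi_def)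

lemma blen_pos: "blen k \<ge> 1"
  using tlast by (cases "k + 1 < m") (auto simp: blen_def phi_def)

lemma blen_lt: "k + 1 < m \<Longrightarrow> blen k = t ! k + 1"
  by (simp add: blen_def phi_lt)
lemma blen_last: "\<not> k + 1 < m \<Longrightarrow> blen k = t ! (m - 1)"
  by (simp add: blen_def phi_last)

lemma phi_set: "set (phi t k) \<subseteq> {..<m}"
  using len2 by (cases "k + 1 < m") (auto simp: phi_def)

lemma phi_word_append: "phi_word t (xs @ ys) = phi_word t xs @ phi_word t ys"
  by (simp add: phi_word_def)

lemma phi_word_len: "length (phi_word t xs) = (\<Sum>x\<leftarrow>xs. blen x)"
  by (induction xs) (auto simp: phi_word_def blen_def)

lemma phi_word_len_ge: "length (phi_word t xs) \<ge> length xs"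
proof (induction xs)
  case Nil then show ?case by (simp add: phi_word_def)
next
  case (Cons x xs)
  have "length (phi_word t (x # xs)) = blen x + length (phi_word t xs)"
    by (simp add: phi_word_def blen_def)
  then show ?case using Cons blen_pos[of x] by simp
qed

lemma phi_iter_Suc: "phi_iter t (Suc n) = phi_word t (phi_iter t n)"
  by (simp add: phi_iter_def)

lemma phi0: "phi t 0 = replicate (t ! 0) 0 @ [1]"
  using len2 phi_lt[of 0] by simp

lemma phi_iter_prefix1: "\<exists>zs. phi_iter t (Suc n) = phi_iter t n @ zs"
proof (induction n)
  case 0
  have "phi_iter t (Suc 0) = phi t 0" by (simp add: phi_iter_def phi_word_def)
  also have "\<dots> = [0] @ (replicate (t ! 0 - 1) 0 @ [1])"
    using t0 phi0 by (cases "t ! 0") auto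
  finally show ?case by (auto simp: phi_iter_def)
next
  case (Suc n)
  then obtain zs where "phi_iter t (Suc n) = phi_iter t n @ zs" by blast
  then have "phi_iter t (Suc (Suc n)) = phi_iter t (Suc n) @ phi_word t zs"
    by (simp add: phi_iter_Suc phi_word_append)
  then show ?case by blast
qed

lemma phi_iter_prefix: "n \<le> n' \<Longrightarrow> \<exists>zs. phi_iter t n' = phi_iter t n @ zs"
proof (induction n' rule: dec_induct)
  case base then show ?case by auto
next
  case (step n')
  then show ?case using phi_iter_prefix1[of n'] by force
qed

lemma phi_iter_hd: "\<exists>zs. phi_iter t n = 0 # zs"
  using phi_iter_prefix[of 0 n] by (auto simp: phi_iter_def)

lemma phi_iter_len: "length (phi_iter t n) > n"
proof (induction n)
  case 0 then show ?case by (simp add: phi_iter_def)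
next
  case (Suc n)
  obtain zs where z: "phi_iter t n = 0 # zs" using phi_iter_hd by blast
  have "phi_iter t (Suc n) = phi t 0 @ phi_word t zs"
    by (simp add: phi_iter_Suc z phi_word_def)
  then have "length (phi_iter t (Suc n)) = t ! 0 + 1 + length (phi_word t zs)"
    by (simp add: phi0)
  moreover have "length (phi_word t zs) \<ge> length zs" by (rule phi_word_len_ge)
  ultimately show ?case using Suc z t0 by simp
qed

lemma u_nth: assumes "i < length (phi_iter t n)" shows "u i = phi_iter t n ! i"
proof -
  let ?n0 = "LEAST n. i < length (phi_iter t n)"
  have le: "?n0 \<le> n" using assms by (rule Least_le)
  have lt: "i < length (phi_iter t ?n0)" using assms by (rule LeastI)
  obtain zs where "phi_iter t n = phi_iter t ?n0 @ zs" using phi_iter_prefix[OF le] by blast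
  then show ?thesis using lt by (simp add: u_beta_def nth_append)
qed

lemma u_take: "take i (phi_iter t n) = map u [0..<i]" if "i \<le> length (phi_iter t n)"
proof (rule nth_equalityI)
  show "length (take i (phi_iter t n)) = length (map u [0..<i])" using that by simp
  fix j assume "j < length (take i (phi_iter t n))"
  then show "take i (phi_iter t n) ! j = map u [0..<i] ! j" using that u_nth[of j n] by simp
qed

lemma set_phi_word: "set xs \<subseteq> {..<m} \<Longrightarrow> set (phi_word t xs) \<subseteq> {..<m}"
  using phi_set by (auto simp: phi_word_def)

lemma phi_iter_set: "set (phi_iter t n) \<subseteq> {..<m}"
proof (induction n)
  case 0 then show ?case using len2 by (cases t) (auto simp: phi_iter_def)
next
  case (Suc n) then show ?case by (simp add: phi_iter_Suc set_phi_word)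
qed

lemma u_lt: "u i < m"
proof -
  have "i < length (phi_iter t i)" using phi_iter_len by blast
  then show ?thesis using u_nth phi_iter_set nth_mem by fastforce
qed

lemma S_Suc: "S (Suc i) = S i + blen (u i)"
  by (simp add: S_def)

lemma S_0[simp]: "S 0 = 0" by (simp add: S_def)

lemma S_eq_len: "S i = length (phi_word t (map u [0..<i]))"
  by (simp add: S_def phi_word_len interv_sum_list_conv_sum_set_nat atLeast0LessThan)

lemma u_block: assumes "r < blen (u i)" shows "u (S i + r) = phi t (u i) ! r"
proof -
  let ?n = "Suc (Suc i)"
  have l1: "Suc i \<le> length (phi_iter t (Suc i))" using phi_iter_len[of "Suc i"] by simp
  obtain zs where z: "phi_iter t (Suc i) = map u [0..<Suc i] @ zs"
    using u_take[OF l1] by (metis append_take_drop_id)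
  have "phi_iter t ?n = phi_word t (phi_iter t (Suc i))" by (rule phi_iter_Suc)
  also have "\<dots> = phi_word t (map u [0..<i]) @ phi t (u i) @ phi_word t zs"
    by (simp add: z phi_word_def)
  finally have pe: "phi_iter t ?n = phi_word t (map u [0..<i]) @ phi t (u i) @ phi_word t zs" .
  then have e: "phi_iter t ?n ! (S i + r) = phi t (u i) ! r"
    using assms by (simp add: S_eq_len nth_append blen_def)
  have "S i + r < length (phi_iter t ?n)"
    using pe assms by (simp add: S_eq_len blen_def)
  then show ?thesis using e u_nth by simp
qed

end

context pd begin

abbreviation "tm \<equiv> t ! (m - 1)"

lemma tm_pos: "tm \<ge> 1" using tlast .

lemma phi_nth_lt0: "k + 1 < m \<Longrightarrow> r < t ! k \<Longrightarrow> phi t k ! r = 0"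
  by (simp add: phi_lt nth_append)
lemma phi_nth_ltk: "k + 1 < m \<Longrightarrow> phi t k ! (t ! k) = k + 1"
  by (simp add: phi_lt nth_append)
lemma phi_nth_last0: "\<not> k + 1 < m \<Longrightarrow> r < tm \<Longrightarrow> phi t k ! r = 0"
  by (simp add: phi_last)

lemma sg_inj: "a < m \<Longrightarrow> b < m \<Longrightarrow> sg a = sg b \<Longrightarrow> a = b"
  by (auto simp: sg_def split: if_splits)
lemma sg_lt: "sg a < m" using len2 by (auto simp: sg_def)
lemma sg_surj: "b < m \<Longrightarrow> \<exists>a<m. sg a = b"
proof (cases b)
  case 0 assume "b < m"
  then show ?thesis using 0 len2 by (intro exI[of _ "m - 1"]) (auto simp: sg_def)
next
  case (Suc c) assume "b < m"
  then show ?thesis using Suc by (intro exI[of _ c]) (auto simp: sg_def)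
qed

lemma phi_nth_end: "phi t k ! (blen k - 1) = sg k"
proof (cases "k + 1 < m")
  case True then show ?thesis by (simp add: blen_lt phi_nth_ltk sg_def)
next
  case False
  then show ?thesis using tm_pos by (simp add: blen_last phi_nth_last0 sg_def)
qed

lemma u_end: "u (S (Suc i) - 1) = sg (u i)"
proof -
  have "S (Suc i) - 1 = S i + (blen (u i) - 1)" using blen_pos[of "u i"] by (simp add: S_Suc)
  then show ?thesis using u_block[of "blen (u i) - 1" i] blen_pos[of "u i"] phi_nth_end by simp
qed

lemma S_Suc_gt: "S i < S (Suc i)" using blen_pos[of "u i"] by (simp add: S_Suc)

lemma S_mono: "i < j \<Longrightarrow> S i < S j"
  using S_Suc_gt by (rule lift_Suc_mono_less)

lemma S_mono_le: "i \<le> j \<Longrightarrow> S i \<le> S j"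
  using S_mono by (cases "i = j") (auto simp: le_less)

lemma S_less_iff: "S i < S j \<longleftrightarrow> i < j"
proof
  assume a: "S i < S j"
  show "i < j"
  proof (rule ccontr)
    assume "\<not> i < j" then have "j \<le> i" by simp
    then have "S j \<le> S i" by (rule S_mono_le)
    then show False using a by simp
  qed
next
  assume "i < j" then show "S i < S j" by (rule S_mono)
qed

lemma S_inj: "S i = S j \<Longrightarrow> i = j"
  using S_less_iff by (metis linorder_neqE_nat less_irrefl)

lemma S_ge: "S i \<ge> i"
proof (induction i)
  case 0 then show ?case by simp
next
  case (Suc i) then show ?case using S_Suc_gt[of i] by simp
qed

lemma u0: "u 0 = 0"
proof -
  have "0 < length (phi_iter t 0)" by (simp add: phi_iter_def)
  then show ?thesis by (simp add: u_nth[of 0 0] phi_iter_def)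
qed

lemma S1: "S 1 = t ! 0 + 1"
  using len2 by (simp add: S_def u0 blen_lt)

lemma S_ge_Suc: "i \<ge> 1 \<Longrightarrow> S i \<ge> i + 1"
proof (induction i rule: dec_induct)
  case base then show ?case using S1 t0 by simp
next
  case (step i) then show ?case using S_Suc_gt[of i] by simp
qed

lemma S_add: "S (i + k) = S i + (\<Sum>l<k. blen (u (i + l)))"
proof (induction k)
  case 0 then show ?case by simp
next
  case (Suc k) then show ?case by (simp add: S_Suc)
qed

lemma block_of: "\<exists>i. S i \<le> p \<and> p < S (Suc i)"
proof -
  define i where "i = (LEAST i. p < S (Suc i))"
  have ex: "p < S (Suc p)" using S_ge[of "Suc p"] by simp
  have 1: "p < S (Suc i)" unfolding i_def using ex by (rule LeastI)
  have 2: "S i \<le> p"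
  proof (cases i)
    case 0 then show ?thesis by simp
  next
    case (Suc j)
    have "j < (LEAST i. p < S (Suc i))" using Suc unfolding i_def by simp
    then have "\<not> p < S (Suc j)" by (rule not_less_Least)
    then show ?thesis using Suc by simp
  qed
  show ?thesis using 1 2 by blast
qed

lemma block_unique: "S i \<le> p \<Longrightarrow> p < S (Suc i) \<Longrightarrow> S j \<le> p \<Longrightarrow> p < S (Suc j) \<Longrightarrow> i = j"
proof (rule ccontr)
  assume a: "S i \<le> p" "p < S (Suc i)" "S j \<le> p" "p < S (Suc j)" "i \<noteq> j"
  show False
  proof (cases "i < j")
    case True then have "S (Suc i) \<le> S j" by (intro S_mono_le) simp
    then show False using a by simp
  next
    case False then have "j < i" using a by simp
    then have "S (Suc j) \<le> S i" by (intro S_mono_le) simp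
    then show False using a by simp
  qed
qed

lemma u_pos: "S i \<le> p \<Longrightarrow> p < S (Suc i) \<Longrightarrow> u p = phi t (u i) ! (p - S i)"
  using u_block[of "p - S i" i] by (simp add: S_Suc)

lemma nonzero_end:
  assumes "u p \<noteq> 0"
  shows "\<exists>i. Suc p = S (Suc i) \<and> u i + 1 < m \<and> u p = u i + 1 \<and> S i + t ! (u i) = p"
proof -
  obtain i where i: "S i \<le> p" "p < S (Suc i)" using block_of by blast
  have up: "u p = phi t (u i) ! (p - S i)" using u_pos[OF i] .
  have "p - S i < blen (u i)" using i by (simp add: S_Suc)
  show ?thesis
  proof (cases "u i + 1 < m")
    case False
    then have "phi t (u i) ! (p - S i) = 0"
      using \<open>p - S i < blen (u i)\<close> by (simp add: blen_last phi_nth_last0)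
    then show ?thesis using up assms by simp
  next
    case True
    then have bl: "blen (u i) = t ! (u i) + 1" by (rule blen_lt)
    have "p - S i = t ! (u i)"
    proof (rule ccontr)
      assume "p - S i \<noteq> t ! (u i)"
      then have "p - S i < t ! (u i)" using \<open>p - S i < blen (u i)\<close> bl by simp
      then show False using up assms phi_nth_lt0[OF True] by simp
    qed
    have e1: "S i + t ! (u i) = p" using \<open>p - S i = t ! (u i)\<close> i(1) by simp
    have e2: "Suc p = S (Suc i)" using e1 bl by (simp add: S_Suc)
    have e3: "u p = u i + 1" using up \<open>p - S i = t ! (u i)\<close> phi_nth_ltk[OF True] by simp
    show ?thesis using e1 e2 e3 True by blast
  qed
qed

end

context pd begin

lemma sg_zero: "a < m \<Longrightarrow> sg a = 0 \<Longrightarrow> a = m - 1"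
  by (auto simp: sg_def split: if_splits)

lemma njj: "1 \<le> j \<Longrightarrow> u p = j \<Longrightarrow> u (Suc p) = j \<Longrightarrow> False"
proof (induction j arbitrary: p)
  case 0 then show ?case by simp
next
  case (Suc j)
  obtain i where i: "Suc p = S (Suc i)" "u i + 1 < m" "u p = u i + 1" "S i + t ! (u i) = p"
    using nonzero_end[of p] Suc.prems by auto
  obtain i' where i': "Suc (Suc p) = S (Suc i')" "u i' + 1 < m" "u (Suc p) = u i' + 1"
      "S i' + t ! (u i') = Suc p"
    using nonzero_end[of "Suc p"] Suc.prems by auto
  have ui: "u i = j" "u i' = j" using i i' Suc.prems by auto
  have "S (Suc i) \<le> Suc p" "Suc p < S (Suc (Suc i))" using i S_Suc_gt[of "Suc i"] by auto
  moreover have "S i' \<le> Suc p" "Suc p < S (Suc i')" using i' by auto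
  ultimately have ii: "i' = Suc i" using block_unique by blast
  have "t ! j = 0" using i i' ii ui by simp
  then have "1 \<le> j" using t0 by (cases j) auto
  then show ?case using Suc.IH[of i] ui ii by simp
qed

lemma no_mm: assumes "u i = m - 1" "u (Suc i) = m - 1" shows False
proof -
  have "1 \<le> m - 1" using len2 by simp
  from njj[OF this] assms show False by blast
qed

definition Bm :: nat where "Bm = sum_list t + 1"

lemma blen_le: "blen k \<le> Bm"
proof (cases "k + 1 < m")
  case True
  then have "t ! k \<le> sum_list t" by (intro elem_le_sum_list) simp
  then show ?thesis using True by (simp add: blen_lt Bm_def)
next
  case False
  have "t ! (m - 1) \<le> sum_list t" using len2 by (intro elem_le_sum_list) simp
  then show ?thesis using False by (simp add: blen_last Bm_def)
qed

lemma S_add_le: "S (i + k) \<le> S i + k * Bm"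
proof (induction k)
  case 0 then show ?case by simp
next
  case (Suc k) then show ?case using blen_le[of "u (i + k)"] by (simp add: S_Suc)
qed

lemma nz_near: "\<exists>f < 2 * Bm. u (p + f) \<noteq> 0"
proof -
  obtain i where i: "S i \<le> p" "p < S (Suc i)" using block_of by blast
  show ?thesis
  proof (cases "u i + 1 < m")
    case True
    have "u (S (Suc i) - 1) \<noteq> 0" using u_end[of i] True by (simp add: sg_def)
    moreover have "S (Suc i) \<le> S i + Bm" using S_add_le[of i 1] by simp
    ultimately show ?thesis using i
      by (intro exI[of _ "S (Suc i) - 1 - p"]) auto
  next
    case False
    then have "u i = m - 1" using u_lt[of i] by simp
    then have "u (Suc i) \<noteq> m - 1" using no_mm by blast
    then have "u (Suc i) + 1 < m" using u_lt[of "Suc i"] by simp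
    then have "u (S (Suc (Suc i)) - 1) \<noteq> 0" using u_end[of "Suc i"] by (simp add: sg_def)
    moreover have "S (i + 2) \<le> S i + 2 * Bm" by (rule S_add_le)
    moreover have "S (Suc i) < S (Suc (Suc i))" by (rule S_Suc_gt)
    ultimately show ?thesis using i
      by (intro exI[of _ "S (Suc (Suc i)) - 1 - p"]) (auto simp: numeral_2_eq_2)
  qed
qed

lemma u_prev_start: "u (S (Suc i) - 1) = sg (u i)" by (rule u_end)

lemma single_ls:
  "1 \<le> q \<Longrightarrow> 1 \<le> q' \<Longrightarrow> u q = c \<Longrightarrow> u q' = c \<Longrightarrow> u (q - 1) \<noteq> u (q' - 1) \<Longrightarrow> c = 0"
proof (induction c arbitrary: q q')
  case 0 then show ?case by simp
next
  case (Suc c)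
  obtain i where i: "Suc q = S (Suc i)" "u i + 1 < m" "u q = u i + 1" "S i + t ! (u i) = q"
    using nonzero_end[of q] Suc.prems by auto
  obtain i' where i': "Suc q' = S (Suc i')" "u i' + 1 < m" "u q' = u i' + 1" "S i' + t ! (u i') = q'"
    using nonzero_end[of q'] Suc.prems by auto
  have ui: "u i = c" "u i' = c" using i i' Suc.prems by auto
  show ?case
  proof (cases "t ! c = 0")
    case False
    have a: "u (q - 1) = 0"
    proof -
      have "S i \<le> q - 1" "q - 1 < S (Suc i)" using i ui False by auto
      then have "u (q - 1) = phi t (u i) ! (q - 1 - S i)" by (rule u_pos)
      also have "\<dots> = 0" using i ui False by (intro phi_nth_lt0) auto
      finally show ?thesis .
    qed
    have b: "u (q' - 1) = 0"
    proof -
      have "S i' \<le> q' - 1" "q' - 1 < S (Suc i')" using i' ui False by auto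
      then have "u (q' - 1) = phi t (u i') ! (q' - 1 - S i')" by (rule u_pos)
      also have "\<dots> = 0" using i' ui False by (intro phi_nth_lt0) auto
      finally show ?thesis .
    qed
    show ?thesis using a b Suc.prems by simp
  next
    case True
    have "q = S i" "q' = S i'" using i i' ui True by auto
    then obtain j j' where j: "i = Suc j" "i' = Suc j'"
      using Suc.prems by (cases i; cases i'; auto)
    have "u (q - 1) = sg (u j)" "u (q' - 1) = sg (u j')"
      using u_end[of j] u_end[of j'] j \<open>q = S i\<close> \<open>q' = S i'\<close> by auto
    then have "u j \<noteq> u j'" using Suc.prems by auto
    then have "c = 0" using Suc.IH[of "Suc j" "Suc j'"] ui j by simp
    then show ?thesis using True t0 by simp
  qed
qed

end

context pd begin

lemma sync1:
  assumes q1: "1 \<le> q" and z: "\<forall>f'<f0. u (q + f') = 0" and nz: "u (q + f0) = c" "c \<noteq> 0"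
  shows "(f0 = t ! (c - 1) \<or> f0 = t ! (c - 1) + tm) \<longrightarrow> (\<exists>i. q = S (Suc i))"
    and "\<not> (f0 = t ! (c - 1) \<or> f0 = t ! (c - 1) + tm) \<longrightarrow> u (q - 1) = 0"
proof -
  obtain k where k: "Suc (q + f0) = S (Suc k)" "u k + 1 < m" "u (q + f0) = u k + 1"
      "S k + t ! (u k) = q + f0"
    using nonzero_end[of "q + f0"] nz by auto
  have ck: "c - 1 = u k" using k nz by simp
  define T where "T = t ! (c - 1)"
  have kT: "S k + T = q + f0" using k ck T_def by simp
  have Sk1: "S (Suc k) = S k + T + 1" using k kT by simp
  have res: "((f0 = T \<or> f0 = T + tm) \<longrightarrow> (\<exists>i. q = S (Suc i))) \<and>
        (\<not> (f0 = T \<or> f0 = T + tm) \<longrightarrow> u (q - 1) = 0)"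
  proof (cases "f0 < T")
    case True
    have "S k \<le> q - 1" "q - 1 < S (Suc k)" using kT Sk1 True q1 by auto
    then have "u (q - 1) = phi t (u k) ! (q - 1 - S k)" by (rule u_pos)
    also have "\<dots> = 0" using k(2) True kT q1 ck T_def by (intro phi_nth_lt0) auto
    finally show ?thesis using True by auto
  next
    case False
    show ?thesis
    proof (cases "f0 = T")
      case True
      then have "q = S k" using kT by simp
      then have "k \<noteq> 0" using q1 by (cases k) auto
      then obtain i where "k = Suc i" by (cases k) auto
      then show ?thesis using \<open>q = S k\<close> True by auto
    next
      case False2: False
      define g where "g = f0 - T"
      have g1: "g \<ge> 1" "f0 = T + g" using False False2 g_def by auto
      have Skq: "S k = q + g" using kT g1 by simp
      then obtain k1 where k1: "k = Suc k1" using q1 g1 by (cases k) auto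
      have "S k - 1 = q + (g - 1)" using Skq g1 by simp
      moreover have "g - 1 < f0" using g1 by simp
      ultimately have "u (S k - 1) = 0" using z by simp
      then have "sg (u k1) = 0" using u_end[of k1] k1 by simp
      then have uk1: "u k1 = m - 1" using sg_zero u_lt by blast
      have Sk1': "S k = S k1 + tm" using k1 uk1 len2 by (simp add: S_Suc blen_last)
      show ?thesis
      proof (cases "g < tm")
        case True
        have "S k1 \<le> q - 1" "q - 1 < S (Suc k1)" using Skq Sk1' True k1 q1 g1 by auto
        then have "u (q - 1) = phi t (u k1) ! (q - 1 - S k1)" by (rule u_pos)
        also have "\<dots> = 0" using uk1 len2 Skq Sk1' True q1 g1 by (intro phi_nth_last0) auto
        finally show ?thesis using True g1 by auto
      next
        case False3: False
        show ?thesis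
        proof (cases "g = tm")
          case True
          then have "q = S k1" using Skq Sk1' by simp
          then have "k1 \<noteq> 0" using q1 by (cases k1) auto
          then obtain i where "k1 = Suc i" by (cases k1) auto
          then show ?thesis using \<open>q = S k1\<close> True g1 by auto
        next
          case False4: False
          then have gt: "g > tm" using False3 by simp
          have Sk1q: "S k1 = q + (g - tm)" using Skq Sk1' gt by simp
          then obtain k2 where k2: "k1 = Suc k2" using gt by (cases k1) auto
          have "S k1 - 1 = q + (g - tm - 1)" using Sk1q gt by simp
          moreover have "g - tm - 1 < f0" using g1 gt by simp
          ultimately have "u (S k1 - 1) = 0" using z by simp
          then have "sg (u k2) = 0" using u_end[of k2] k2 by simp
          then have "u k2 = m - 1" using sg_zero u_lt by blast
          then have False using no_mm[of k2] uk1 k2 by simp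
          then show ?thesis by simp
        qed
      qed
    qed
  qed
  then show "(f0 = t ! (c - 1) \<or> f0 = t ! (c - 1) + tm) \<longrightarrow> (\<exists>i. q = S (Suc i))"
    and "\<not> (f0 = t ! (c - 1) \<or> f0 = t ! (c - 1) + tm) \<longrightarrow> u (q - 1) = 0"
    using T_def by auto
qed

lemma sync:
  assumes "1 \<le> q" "1 \<le> q'" "u (q - 1) \<noteq> u (q' - 1)" "\<forall>k<L. u (q + k) = u (q' + k)"
    "f < L" "u (q + f) \<noteq> 0"
  shows "\<exists>i i'. q = S (Suc i) \<and> q' = S (Suc i') \<and> u i \<noteq> u i'"
proof -
  define f0 where "f0 = (LEAST f. u (q + f) \<noteq> 0)"
  have nz: "u (q + f0) \<noteq> 0" unfolding f0_def using assms(6) by (rule LeastI)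
  have le: "f0 \<le> f" unfolding f0_def using assms(6) by (rule Least_le)
  have z: "\<forall>f'<f0. u (q + f') = 0" unfolding f0_def using not_less_Least by blast
  have z': "\<forall>f'<f0. u (q' + f') = 0" using z assms(4,5) le by auto
  have nz': "u (q' + f0) = u (q + f0)" using assms(4,5) le by auto
  define c where "c = u (q + f0)"
  have cnz: "c \<noteq> 0" using nz c_def by simp
  note s = sync1[OF assms(1) z c_def[symmetric] cnz] sync1[OF assms(2) z' nz'[folded c_def] cnz]
  show ?thesis
  proof (cases "f0 = t ! (c - 1) \<or> f0 = t ! (c - 1) + tm")
    case True
    then obtain i i' where ii: "q = S (Suc i)" "q' = S (Suc i')" using s by blast
    have "u (q - 1) = sg (u i)" "u (q' - 1) = sg (u i')" using u_end ii by auto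
    then have "u i \<noteq> u i'" using assms(3) by auto
    then show ?thesis using ii by blast
  next
    case False
    then have "u (q - 1) = 0" "u (q' - 1) = 0" using s by auto
    then show ?thesis using assms(3) by simp
  qed
qed


end

context pd begin
definition fz :: "nat \<Rightarrow> nat" where
  "fz i = (if u i + 1 < m then t ! (u i) else tm + t ! (u (Suc i)))"
definition cz :: "nat \<Rightarrow> nat" where
  "cz i = (if u i + 1 < m then u i + 1 else u (Suc i) + 1)"

lemma fz_props:
  "u (S i + fz i) = cz i" "cz i \<noteq> 0" "\<forall>f'<fz i. u (S i + f') = 0"
  "S i + fz i < S (Suc (Suc i))" "u i = (if fz i = t ! (cz i - 1) then cz i - 1 else m - 1)"
proof -
  have all: "u (S i + fz i) = cz i \<and> cz i \<noteq> 0 \<and> (\<forall>f'<fz i. u (S i + f') = 0) \<and>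
    S i + fz i < S (Suc (Suc i)) \<and> u i = (if fz i = t ! (cz i - 1) then cz i - 1 else m - 1)"
  proof (cases "u i + 1 < m")
    case True
    have bl: "blen (u i) = t ! (u i) + 1" using True by (rule blen_lt)
    have a1: "u (S i + fz i) = cz i"
      using u_block[of "t ! (u i)" i] bl phi_nth_ltk[OF True] True by (simp add: fz_def cz_def)
    have a3: "\<forall>f'<fz i. u (S i + f') = 0"
      using u_block[of _ i] bl phi_nth_lt0[OF True] True by (simp add: fz_def)
    have a4: "S i + fz i < S (Suc (Suc i))"
      using True bl S_Suc_gt[of "Suc i"] by (simp add: fz_def S_Suc)
    have a2: "cz i \<noteq> 0" using True by (simp add: cz_def)
    have a5: "u i = (if fz i = t ! (cz i - 1) then cz i - 1 else m - 1)"
      using True by (simp add: fz_def cz_def)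
    show ?thesis using a1 a2 a3 a4 a5 by blast
  next
    case False
    then have ui: "u i = m - 1" using u_lt[of i] by simp
    then have "u (Suc i) \<noteq> m - 1" using no_mm by blast
    then have T2: "u (Suc i) + 1 < m" using u_lt[of "Suc i"] by simp
    have bl: "blen (u i) = tm" using False by (rule blen_last)
    have bl2: "blen (u (Suc i)) = t ! (u (Suc i)) + 1" using T2 by (rule blen_lt)
    have SS: "S (Suc i) = S i + tm" using bl by (simp add: S_Suc)
    have a1: "u (S i + fz i) = cz i"
      using u_block[of "t ! (u (Suc i))" "Suc i"] bl2 phi_nth_ltk[OF T2] False SS
      by (simp add: fz_def cz_def add.assoc)
    have a3: "\<forall>f'<fz i. u (S i + f') = 0"
    proof (intro allI impI)
      fix f' assume f': "f' < fz i"
      show "u (S i + f') = 0"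
      proof (cases "f' < tm")
        case True
        then show ?thesis using u_block[of f' i] bl phi_nth_last0[OF False] by simp
      next
        case False2: False
        then have "f' - tm < t ! (u (Suc i))" using f' False by (simp add: fz_def)
        then have "u (S (Suc i) + (f' - tm)) = 0"
          using u_block[of "f' - tm" "Suc i"] bl2 phi_nth_lt0[OF T2] by simp
        then show ?thesis using SS False2 by simp
      qed
    qed
    have a4: "S i + fz i < S (Suc (Suc i))" using False SS bl2 by (simp add: fz_def S_Suc)
    have a5: "u i = (if fz i = t ! (cz i - 1) then cz i - 1 else m - 1)"
      using False ui tm_pos by (simp add: fz_def cz_def)
    have a2: "cz i \<noteq> 0" using False by (simp add: cz_def)
    show ?thesis using a1 a2 a3 a4 a5 by blast
  qed
  then show "u (S i + fz i) = cz i" "cz i \<noteq> 0" "\<forall>f'<fz i. u (S i + f') = 0"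
    "S i + fz i < S (Suc (Suc i))" "u i = (if fz i = t ! (cz i - 1) then cz i - 1 else m - 1)"
    by auto
qed

lemma first_nz_unique:
  assumes "u (q + f) \<noteq> 0" "\<forall>f'<f. u (q + f') = 0" "u (q + g) \<noteq> 0" "\<forall>f'<g. u (q + f') = 0"
  shows "f = g"
proof (rule ccontr)
  assume "f \<noteq> g"
  then consider "f < g" | "g < f" by linarith
  then show False
  proof cases
    case 1 then show False using assms(1,4) by auto
  next
    case 2 then show False using assms(2,3) by auto
  qed
qed

lemma b1:
  assumes w: "\<forall>l<L. u (S i + l) = u (S i' + l)" and L: "S (Suc (Suc i)) \<le> S i + L"
  shows "u i = u i'"
proof -
  have fL: "fz i < L" using fz_props(4)[of i] L by simp
  have e1: "u (S i' + fz i) = u (S i + fz i)" using w fL by simp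
  have n1: "u (S i' + fz i) \<noteq> 0" using e1 fz_props(1,2)[of i] by simp
  have z1: "\<forall>f'<fz i. u (S i' + f') = 0" using w fL fz_props(3)[of i] by auto
  have n0: "u (S i' + fz i') \<noteq> 0" using fz_props(1,2)[of i'] by simp
  have "fz i' = fz i"
    using first_nz_unique[OF n0 fz_props(3)[of i'] n1 z1] .
  moreover have "cz i' = cz i" using fz_props(1)[of i'] fz_props(1)[of i] e1 \<open>fz i' = fz i\<close> by simp
  ultimately show ?thesis using fz_props(5)[of i] fz_props(5)[of i'] by simp
qed

lemma pu:
  "\<forall>l<L. u (S i + l) = u (S i' + l) \<Longrightarrow> S (i + k + 1) \<le> S i + L \<Longrightarrow> j < k \<Longrightarrow> u (i + j) = u (i' + j)"
proof (induction k arbitrary: i i' L j)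
  case 0 then show ?case by simp
next
  case (Suc k)
  have L2: "S (Suc (Suc i)) \<le> S i + L"
    using Suc.prems(2) S_mono_le[of "Suc (Suc i)" "i + Suc k + 1"] by simp
  have eq: "u i = u i'" using b1[OF Suc.prems(1) L2] .
  show ?case
  proof (cases j)
    case 0 then show ?thesis using eq by simp
  next
    case (Suc j')
    define L' where "L' = L - blen (u i)"
    have Si: "S (Suc i) = S i + blen (u i)" "S (Suc i') = S i' + blen (u i)"
      using eq by (simp_all add: S_Suc)
    have bL: "blen (u i) \<le> L" using L2 S_Suc_gt[of "Suc i"] Si by simp
    have w': "\<forall>l<L'. u (S (Suc i) + l) = u (S (Suc i') + l)"
      using Suc.prems(1) Si bL by (auto simp: L'_def add.assoc)
    have L'': "S (Suc i + k + 1) \<le> S (Suc i) + L'"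
      using Suc.prems(2) Si bL by (simp add: L'_def)
    have "u (Suc i + j') = u (Suc i' + j')" using Suc.IH[OF w' L''] Suc.prems(3) \<open>j = Suc j'\<close> by simp
    then show ?thesis using \<open>j = Suc j'\<close> by simp
  qed
qed

lemma img:
  assumes e: "\<forall>k<n. u (i + k) = u (i' + k)"
  shows "S (i + n) - S i = S (i' + n) - S i'"
    and "p < S (i + n) - S i \<Longrightarrow> u (S i + p) = u (S i' + p)"
proof -
  have sd: "\<And>l. l \<le> n \<Longrightarrow> S (i + l) - S i = S (i' + l) - S i'"
  proof -
    fix l assume "l \<le> n"
    then have "(\<Sum>j<l. blen (u (i + j))) = (\<Sum>j<l. blen (u (i' + j)))"
      using e by (intro sum.cong) auto
    then show "S (i + l) - S i = S (i' + l) - S i'" using S_add[of i l] S_add[of i' l] by simp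
  qed
  then show "S (i + n) - S i = S (i' + n) - S i'" by simp
  assume p: "p < S (i + n) - S i"
  obtain j where j: "S j \<le> S i + p" "S i + p < S (Suc j)" using block_of by blast
  have ij: "i \<le> j" using j S_less_iff[of i "Suc j"] by simp
  have "S j < S (i + n)" using j p S_mono_le[of i "i + n"] by linarith
  then have jn: "j < i + n" using S_less_iff by simp
  define l where "l = j - i"
  have jl: "j = i + l" "l < n" using ij jn l_def by auto
  define r where "r = S i + p - S j"
  have r: "r < blen (u (i + l))" using j jl r_def by (simp add: S_Suc)
  have ul: "u (i + l) = u (i' + l)" using e jl by simp
  have s1: "S (i + l) - S i = S (i' + l) - S i'" using sd jl by simp
  have m1: "S i \<le> S (i + l)" "S i' \<le> S (i' + l)" by (simp_all add: S_mono_le)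
  have "u (S i + p) = u (S (i + l) + r)" using r_def jl j by simp
  also have "\<dots> = phi t (u (i + l)) ! r" using u_block r by simp
  also have "\<dots> = u (S (i' + l) + r)" using u_block[of r "i' + l"] r ul by simp
  also have "S (i' + l) + r = S i' + p" using s1 m1 r_def jl j by simp
  finally show "u (S i + p) = u (S i' + p)" .
qed

end

context pd begin

definition ext :: "nat \<Rightarrow> nat \<Rightarrow> bool" where
  "ext a n \<longleftrightarrow> (\<exists>i. u i = a \<and> (\<forall>k<n. u (Suc i + k) = u k))"

lemma ext_mono: "ext a n \<Longrightarrow> n' \<le> n \<Longrightarrow> ext a n'"
  unfolding ext_def by force

lemma ext_transfer: "ext x n \<Longrightarrow> ext (sg x) (S n)"
proof -
  assume "ext x n"
  then obtain i where i: "u i = x" "\<forall>k<n. u (Suc i + k) = u k" unfolding ext_def by blast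
  have e: "\<forall>k<n. u (Suc i + k) = u (0 + k)" using i by simp
  have d: "S (Suc i + n) - S (Suc i) = S n" using img(1)[OF e] by simp
  have p: "\<forall>p<S n. u (S (Suc i) + p) = u p" using img(2)[OF e] d by simp
  have pos: "S (Suc i) \<ge> 1" using S_Suc_gt[of i] by simp
  have "u (S (Suc i) - 1) = sg x" using u_end i by simp
  moreover have "\<forall>k<S n. u (Suc (S (Suc i) - 1) + k) = u k" using p pos by simp
  ultimately show "ext (sg x) (S n)" unfolding ext_def by blast
qed

lemma occurs_all: "k < m \<Longrightarrow> \<exists>i. u i = k"
proof (induction k)
  case 0 then show ?case using u0 by blast
next
  case (Suc k)
  then obtain i where "u i = k" by auto
  then have "u (S (Suc i) - 1) = Suc k" using u_end[of i] Suc.prems by (simp add: sg_def)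
  then show ?case by blast
qed

lemma sg_mod: "k < m \<Longrightarrow> sg k = (k + 1) mod m"
proof (cases "k + 1 < m")
  case True then show ?thesis by (simp add: sg_def)
next
  case False
  assume "k < m"
  then have "k + 1 = m" using False by simp
  then show ?thesis using False by (simp add: sg_def)
qed

lemma sg_pow: "x < m \<Longrightarrow> (sg ^^ k) x = (x + k) mod m"
proof (induction k)
  case 0 then show ?case by simp
next
  case (Suc k)
  have "(sg ^^ Suc k) x = sg ((x + k) mod m)" using Suc by simp
  also have "\<dots> = ((x + k) mod m + 1) mod m" proof (rule sg_mod)
    have "0 < m" using len2 by linarith
    then show "(x + k) mod m < m" by (rule mod_less_divisor)
  qed
  also have "\<dots> = (x + Suc k) mod m" by (simp add: mod_Suc_eq)
  finally show ?case .
qed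

lemma ext1_all: "a < m \<Longrightarrow> ext a 1"
proof -
  assume a: "a < m"
  have "m - 1 < m" using len2 by simp
  then obtain i where i: "u i = m - 1" using occurs_all by blast
  define j where "j = S (Suc i) - 1"
  have uj: "u j = 0" using u_end[of i] i len2 unfolding j_def by (simp add: sg_def)
  have "S (Suc i) \<ge> S 1" by (rule S_mono_le) simp
  then have j1: "j \<ge> 1" using S1 t0 unfolding j_def by simp
  define x0 where "x0 = u (j - 1)"
  have e0: "ext x0 1" unfolding ext_def x0_def using uj j1 u0
    by (intro exI[of _ "j - 1"]) auto
  have x0m: "x0 < m" using u_lt x0_def by simp
  have ek: "ext ((sg ^^ k) x0) 1" for k
  proof (induction k)
    case 0 then show ?case using e0 by simp
  next
    case (Suc k)
    have "ext (sg ((sg ^^ k) x0)) (S 1)" using ext_transfer[OF Suc] .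
    moreover have "S 1 \<ge> 1" using S1 by simp
    ultimately show ?case using ext_mono by simp
  qed
  define k where "k = a + m - x0"
  have "(sg ^^ k) x0 = (x0 + k) mod m" using sg_pow x0m by simp
  also have "x0 + k = a + m" using x0m k_def by simp
  also have "(a + m) mod m = a" using a by simp
  finally show "ext a 1" using ek[of k] by simp
qed

lemma ext_all: "a < m \<Longrightarrow> ext a n"
proof (induction n arbitrary: a rule: less_induct)
  case (less n)
  show ?case
  proof (cases "n \<le> 1")
    case True then show ?thesis using ext1_all[OF less.prems] ext_mono by blast
  next
    case False
    obtain x where x: "x < m" "sg x = a" using sg_surj less.prems by blast
    have "ext x (n - 1)" using less.IH[of "n - 1" x] False x by simp
    then have "ext a (S (n - 1))" using ext_transfer x by blast
    moreover have "S (n - 1) \<ge> n" using S_ge_Suc[of "n - 1"] False by simp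
    ultimately show ?thesis using ext_mono by blast
  qed
qed

end

context pd begin

definition LFa :: "nat \<Rightarrow> (nat \<Rightarrow> nat) \<Rightarrow> bool" where
  "LFa a W \<longleftrightarrow> (\<forall>N. \<exists>q. 1 \<le> q \<and> u (q - 1) = a \<and> (\<forall>k<N. u (q + k) = W k))"

lemma Bm_pos: "Bm \<ge> 1" by (simp add: Bm_def)

lemma occ_block:
  assumes ab: "a \<noteq> b" and la: "LFa a W" and lb: "LFa b W" and N: "N \<ge> 2 * Bm"
  shows "\<exists>i. sg (u i) = a \<and> (\<forall>k<N. u (S (Suc i) + k) = W k)"
proof -
  obtain qa where qa: "1 \<le> qa" "u (qa - 1) = a" "\<forall>k<N. u (qa + k) = W k"
    using la unfolding LFa_def by blast
  obtain qb where qb: "1 \<le> qb" "u (qb - 1) = b" "\<forall>k<N. u (qb + k) = W k"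
    using lb unfolding LFa_def by blast
  obtain f where f: "f < 2 * Bm" "u (qa + f) \<noteq> 0" using nz_near by blast
  have w: "\<forall>k<N. u (qa + k) = u (qb + k)" using qa qb by simp
  obtain i i' where ii: "qa = S (Suc i)" "qb = S (Suc i')" "u i \<noteq> u i'"
    using sync[OF qa(1) qb(1) _ w _ f(2)] qa(2) qb(2) ab f(1) N by auto
  have "sg (u i) = a" using u_end[of i] ii qa by simp
  then show ?thesis using ii qa by blast
qed

lemma consist:
  assumes "\<forall>k<N. u (S (Suc i) + k) = W k" "\<forall>k<N'. u (S (Suc i') + k) = W k"
    "(k + 2) * Bm \<le> N" "(k + 2) * Bm \<le> N'"
  shows "u (Suc i + k) = u (Suc i' + k)"
proof -
  let ?L = "(k + 2) * Bm"
  have w: "\<forall>l<?L. u (S (Suc i) + l) = u (S (Suc i') + l)" using assms by auto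
  have "S (Suc i + (k + 2)) \<le> S (Suc i) + (k + 2) * Bm" by (rule S_add_le)
  then have "S (Suc i + Suc k + 1) \<le> S (Suc i) + ?L" by simp
  from pu[OF w this, of k] show ?thesis by simp
qed

definition NN :: "nat \<Rightarrow> nat" where "NN k = (k + 4) * Bm"

lemma NN_ge: "NN k \<ge> 2 * Bm" "NN k \<ge> (k + 2) * Bm" "NN k \<ge> k * Bm"
  unfolding NN_def by (intro mult_le_mono1; simp)+

lemma NN_mono: "k \<le> k' \<Longrightarrow> NN k \<le> NN k'"
  unfolding NN_def by (intro mult_le_mono1) simp

lemma desub:
  assumes ab: "a \<noteq> b" and la: "LFa a W" and lb: "LFa b W"
  shows "\<exists>V xa xb. xa \<noteq> xb \<and> LFa xa V \<and> LFa xb V \<and>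
     (\<forall>n. \<exists>i. (\<forall>k<NN n. u (S (Suc i) + k) = W k) \<and> (\<forall>k<n. u (Suc i + k) = V k))"
proof -
  define P where "P c N i \<longleftrightarrow> sg (u i) = c \<and> (\<forall>k<N. u (S (Suc i) + k) = W k)" for c N i
  have Pa: "N \<ge> 2 * Bm \<Longrightarrow> \<exists>i. P a N i" for N using occ_block[OF ab la lb] P_def by blast
  have Pb: "N \<ge> 2 * Bm \<Longrightarrow> \<exists>i. P b N i" for N
    using occ_block[OF ab[symmetric] lb la] P_def by blast
  define ia where "ia N = (SOME i. P a N i)" for N
  define ib where "ib N = (SOME i. P b N i)" for N
  have ia: "N \<ge> 2 * Bm \<Longrightarrow> P a N (ia N)" for N using Pa ia_def by (metis someI_ex)
  have ib: "N \<ge> 2 * Bm \<Longrightarrow> P b N (ib N)" for N using Pb ib_def by (metis someI_ex)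
  define V where "V k = u (Suc (ia (NN k)) + k)" for k
  have cons: "P c N i \<Longrightarrow> NN k \<le> N \<Longrightarrow> u (Suc i + k) = V k" for c N i k
  proof -
    assume p: "P c N i" and le: "NN k \<le> N"
    have p2: "P a (NN k) (ia (NN k))" using ia NN_ge by blast
    show "u (Suc i + k) = V k" unfolding V_def
      using consist[where N=N and i=i and W=W and i'="ia (NN k)" and N'="NN k" and k=k] p p2 le NN_ge[of k] unfolding P_def by simp
  qed
  define xa where "xa = u (ia (NN 0))"
  define xb where "xb = u (ib (NN 0))"
  have xa: "P a N i \<Longrightarrow> u i = xa" for N i
  proof -
    assume "P a N i"
    then have "sg (u i) = sg xa" using ia[of "NN 0"] NN_ge unfolding P_def xa_def by simp
    then show "u i = xa" using sg_inj u_lt xa_def by blast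
  qed
  have xb: "P b N i \<Longrightarrow> u i = xb" for N i
  proof -
    assume "P b N i"
    then have "sg (u i) = sg xb" using ib[of "NN 0"] NN_ge unfolding P_def xb_def by simp
    then show "u i = xb" using sg_inj u_lt xb_def by blast
  qed
  have neq: "xa \<noteq> xb"
  proof
    assume "xa = xb"
    then show False using ia[of "NN 0"] ib[of "NN 0"] NN_ge ab unfolding P_def xa_def xb_def by auto
  qed
  have lfa: "LFa xa V" unfolding LFa_def
  proof
    fix N'
    let ?i = "ia (NN N')"
    have p: "P a (NN N') ?i" using ia NN_ge by blast
    have "\<forall>k<N'. u (Suc ?i + k) = V k" using cons[OF p] NN_mono by simp
    moreover have "u (Suc ?i - 1) = xa" using xa[OF p] by simp
    ultimately show "\<exists>q\<ge>1. u (q - 1) = xa \<and> (\<forall>k<N'. u (q + k) = V k)"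
      by (intro exI[of _ "Suc ?i"]) simp
  qed
  have lfb: "LFa xb V" unfolding LFa_def
  proof
    fix N'
    let ?i = "ib (NN N')"
    have p: "P b (NN N') ?i" using ib NN_ge by blast
    have "\<forall>k<N'. u (Suc ?i + k) = V k" using cons[OF p] NN_mono by simp
    moreover have "u (Suc ?i - 1) = xb" using xb[OF p] by simp
    ultimately show "\<exists>q\<ge>1. u (q - 1) = xb \<and> (\<forall>k<N'. u (q + k) = V k)"
      by (intro exI[of _ "Suc ?i"]) simp
  qed
  have occ: "\<exists>i. (\<forall>k<NN n. u (S (Suc i) + k) = W k) \<and> (\<forall>k<n. u (Suc i + k) = V k)" for n
  proof -
    let ?i = "ia (NN n)"
    have p: "P a (NN n) ?i" using ia NN_ge by blast
    have "\<forall>k<n. u (Suc ?i + k) = V k" using cons[OF p] NN_mono by simp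
    then show ?thesis using p unfolding P_def by blast
  qed
  show ?thesis using neq lfa lfb occ by blast
qed

theorem branch_unique:
  "a \<noteq> b \<Longrightarrow> LFa a W \<Longrightarrow> LFa b W \<Longrightarrow> k < n \<Longrightarrow> W k = u k"
proof (induction n arbitrary: W a b k)
  case 0 then show ?case by simp
next
  case (Suc n)
  show ?case
  proof (cases n)
    case 0
    then have k0: "k = 0" using Suc.prems by simp
    obtain qa where qa: "1 \<le> qa" "u (qa - 1) = a" "\<forall>k<1. u (qa + k) = W k"
      using Suc.prems(2) unfolding LFa_def by blast
    obtain qb where qb: "1 \<le> qb" "u (qb - 1) = b" "\<forall>k<1. u (qb + k) = W k"
      using Suc.prems(3) unfolding LFa_def by blast
    have "W 0 = 0" using single_ls[OF qa(1) qb(1)] qa qb Suc.prems(1) by auto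
    then show ?thesis using k0 u0 by simp
  next
    case (Suc n')
    obtain V xa xb where V: "xa \<noteq> xb" "LFa xa V" "LFa xb V"
      "\<forall>n. \<exists>i. (\<forall>k<NN n. u (S (Suc i) + k) = W k) \<and> (\<forall>k<n. u (Suc i + k) = V k)"
      using desub[OF Suc.prems(1-3)] by blast
    have Vu: "\<forall>k<n. V k = u k" using Suc.IH[OF V(1-3)] by blast
    obtain i where i: "\<forall>k<NN n. u (S (Suc i) + k) = W k" "\<forall>k<n. u (Suc i + k) = V k"
      using V(4) by blast
    have e: "\<forall>k<n. u (Suc i + k) = u (0 + k)" using i(2) Vu by simp
    have d: "S (Suc i + n) - S (Suc i) = S n" using img(1)[OF e] by simp
    have Sn: "S n \<ge> n + 1" using S_ge_Suc \<open>n = Suc n'\<close> by simp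
    have SnN: "S n \<le> NN n" using S_add_le[of 0 n] NN_ge(3)[of n] by simp
    have kS: "k < S n" using Suc.prems(4) Sn by simp
    have "u (S (Suc i) + k) = u (S 0 + k)" using img(2)[OF e] d kS by simp
    moreover have "u (S (Suc i) + k) = W k" using i(1) kS SnN by simp
    ultimately show ?thesis by simp
  qed
qed

end

context pd begin

lemma t_ne[simp]: "t \<noteq> []" using len2 by (cases t) auto

lemma fac_iff: "w \<in> factors u \<longleftrightarrow> (\<exists>i. \<forall>k<length w. u (i + k) = w ! k)"
proof
  assume "w \<in> factors u"
  then obtain i where e: "w = map u [i..<i + length w]" unfolding factors_def by blast
  have "\<forall>k<length w. u (i + k) = w ! k"
  proof (intro allI impI)
    fix k assume k: "k < length w"
    have "map u [i..<i + length w] ! k = u (i + k)" using k by simp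
    moreover from e have "w ! k = map u [i..<i + length w] ! k" by (rule arg_cong)
    ultimately show "u (i + k) = w ! k" by simp
  qed
  then show "\<exists>i. \<forall>k<length w. u (i + k) = w ! k" by blast
next
  assume "\<exists>i. \<forall>k<length w. u (i + k) = w ! k"
  then obtain i where i: "\<forall>k<length w. u (i + k) = w ! k" by blast
  have "w = map u [i..<i + length w]" using i by (intro nth_equalityI) auto
  then show "w \<in> factors u" unfolding factors_def by blast
qed

lemma cons_fac: "a # w \<in> factors u \<longleftrightarrow> (\<exists>i. u i = a \<and> (\<forall>k<length w. u (Suc i + k) = w ! k))"
proof
  assume "a # w \<in> factors u"
  then obtain i where i: "\<forall>k<Suc (length w). u (i + k) = (a # w) ! k" using fac_iff by auto
  have "u i = a" using i[rule_format, of 0] by simp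
  moreover have "\<forall>k<length w. u (Suc i + k) = w ! k"
  proof (intro allI impI)
    fix k assume k: "k < length w"
    have "u (i + Suc k) = (a # w) ! Suc k" using i k by blast
    then show "u (Suc i + k) = w ! k" by simp
  qed
  ultimately show "\<exists>i. u i = a \<and> (\<forall>k<length w. u (Suc i + k) = w ! k)" by blast
next
  assume "\<exists>i. u i = a \<and> (\<forall>k<length w. u (Suc i + k) = w ! k)"
  then obtain i where i: "u i = a" "\<forall>k<length w. u (Suc i + k) = w ! k" by blast
  have "\<forall>k<length (a # w). u (i + k) = (a # w) ! k"
  proof (intro allI impI)
    fix k assume "k < length (a # w)"
    then show "u (i + k) = (a # w) ! k" using i by (cases k) auto
  qed
  then show "a # w \<in> factors u" using fac_iff by blast
qed

lemma fac_prefix: "xs @ ys \<in> factors u \<Longrightarrow> xs \<in> factors u"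
proof -
  assume "xs @ ys \<in> factors u"
  then obtain i where i: "\<forall>k<length (xs @ ys). u (i + k) = (xs @ ys) ! k" using fac_iff by blast
  have "\<forall>k<length xs. u (i + k) = xs ! k"
  proof (intro allI impI)
    fix k assume k: "k < length xs"
    then have "u (i + k) = (xs @ ys) ! k" using i by simp
    then show "u (i + k) = xs ! k" using k by (simp add: nth_append)
  qed
  then show "xs \<in> factors u" using fac_iff by blast
qed

lemma fac_suffix: "a # w \<in> factors u \<Longrightarrow> w \<in> factors u"
proof -
  assume "a # w \<in> factors u"
  then obtain i where "\<forall>k<length w. u (Suc i + k) = w ! k" unfolding cons_fac by blast
  then show "w \<in> factors u" unfolding fac_iff by blast
qed

lemma fac_letters: "w \<in> factors u \<Longrightarrow> set w \<subseteq> {..<m}"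
proof
  fix x assume "w \<in> factors u" "x \<in> set w"
  obtain i where i: "\<forall>k<length w. u (i + k) = w ! k" using \<open>w \<in> factors u\<close> fac_iff by blast
  obtain k where k: "k < length w" "w ! k = x" using \<open>x \<in> set w\<close> by (auto simp: in_set_conv_nth)
  have "u (i + k) = x" using i k by simp
  then show "x \<in> {..<m}" using u_lt by auto
qed

abbreviation pref :: "nat \<Rightarrow> nat list" where "pref n \<equiv> map u [0..<n]"

definition E :: "nat list \<Rightarrow> nat set" where "E w = {a. a # w \<in> factors u}"

lemma E_sub: "E w \<subseteq> {..<m}"
proof
  fix x assume "x \<in> E w"
  then have "set (x # w) \<subseteq> {..<m}" unfolding E_def by (intro fac_letters) simp
  then show "x \<in> {..<m}" by simp
qed

lemma E_fin: "finite (E w)" using E_sub finite_subset by blast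

lemma E_pref: "E (pref n) = {..<m}"
proof
  show "E (pref n) \<subseteq> {..<m}" by (rule E_sub)
next
  show "{..<m} \<subseteq> E (pref n)"
  proof
    fix a assume "a \<in> {..<m}"
    then have "ext a n" using ext_all by simp
    then show "a \<in> E (pref n)" unfolding E_def cons_fac ext_def by auto
  qed
qed

lemma pref_fac: "pref n \<in> factors u" unfolding fac_iff by (intro exI[of _ 0]) simp

lemma E_nonempty: "w \<in> factors u \<Longrightarrow> E w \<noteq> {}"
proof -
  assume "w \<in> factors u"
  then obtain i where i: "\<forall>k<length w. u (i + k) = w ! k" using fac_iff by blast
  show "E w \<noteq> {}"
  proof (cases i)
    case 0
    then have "w = pref (length w)" using i by (intro nth_equalityI) auto
    then have "E w = {..<m}" using E_pref by metis
    moreover have "(0::nat) \<in> {..<m}" using len2 by simp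
    ultimately show ?thesis by blast
  next
    case (Suc j)
    then have "u j # w \<in> factors u" unfolding cons_fac using i by auto
    then show ?thesis unfolding E_def by blast
  qed
qed

lemma ls_iff: "left_special u w \<longleftrightarrow> (\<exists>a b. a \<noteq> b \<and> a \<in> E w \<and> b \<in> E w)"
  unfolding left_special_def E_def by auto

lemma ls_card: "left_special u w \<longleftrightarrow> card (E w) \<ge> 2"
proof
  assume "left_special u w"
  then obtain a b where "a \<noteq> b" "a \<in> E w" "b \<in> E w" using ls_iff by blast
  then have "{a, b} \<subseteq> E w" by auto
  then have "card {a, b} \<le> card (E w)" using E_fin by (rule card_mono[rotated])
  then show "card (E w) \<ge> 2" using \<open>a \<noteq> b\<close> by simp
next
  assume "card (E w) \<ge> 2"
  then have "\<not> card (E w) \<le> Suc 0" by simp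
  then show "left_special u w" unfolding ls_iff using card_le_Suc0_iff_eq[OF E_fin] by blast
qed

lemma ls_pref: "left_special u (pref n)"
  using ls_card E_pref len2 by simp

lemma ls_prefix: "left_special u (xs @ ys) \<Longrightarrow> left_special u xs"
proof -
  assume "left_special u (xs @ ys)"
  then obtain a b where ab: "a \<noteq> b" "(a # xs) @ ys \<in> factors u" "(b # xs) @ ys \<in> factors u"
    unfolding left_special_def by auto
  then show "left_special u xs" unfolding left_special_def using fac_prefix by blast
qed

lemma pigeon:
  fixes Q :: "nat \<Rightarrow> nat \<Rightarrow> nat \<Rightarrow> bool"
  assumes all: "\<forall>n. \<exists>a b. a < m \<and> b < m \<and> a \<noteq> b \<and> Q n a b"
    and anti: "\<And>n n' a b. Q n' a b \<Longrightarrow> n \<le> n' \<Longrightarrow> Q n a b"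
  shows "\<exists>a b. a \<noteq> b \<and> (\<forall>n. Q n a b)"
proof (rule ccontr)
  assume "\<not> ?thesis"
  then have nq: "\<forall>a b. a \<noteq> b \<longrightarrow> (\<exists>n. \<not> Q n a b)" by blast
  define P where "P = {(a, b). a < m \<and> b < m \<and> a \<noteq> b}"
  have fP: "finite P" unfolding P_def by (rule finite_subset[of _ "{..<m} \<times> {..<m}"]) auto
  define g where "g p = (SOME n. \<not> Q n (fst p) (snd p))" for p
  define M where "M = (\<Sum>p\<in>P. g p)"
  obtain a b where ab: "a < m" "b < m" "a \<noteq> b" "Q M a b" using all by blast
  have p: "(a, b) \<in> P" using ab P_def by simp
  have ex: "\<exists>n. \<not> Q n a b" using nq ab(3) by blast
  have "\<not> Q (g (a, b)) a b" unfolding g_def using someI_ex[OF ex] by simp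
  moreover have "g (a, b) \<le> M" unfolding M_def by (rule member_le_sum[OF p _ fP]) simp
  ultimately show False using anti ab(4) by blast
qed

lemma branch_pref:
  assumes noMLS: "\<forall>v. left_special u v \<longrightarrow> (\<exists>a<m. left_special u (v @ [a]))"
    and ls: "left_special u w"
  shows "w = pref (length w)"
proof -
  define f where "f = rec_nat w (\<lambda>n v. v @ [SOME a. a < m \<and> left_special u (v @ [a])])"
  have f0: "f 0 = w" by (simp add: f_def)
  have fS: "f (Suc n) = f n @ [SOME a. a < m \<and> left_special u (f n @ [a])]" for n
    by (simp add: f_def)
  have lsf: "left_special u (f n)" for n
  proof (induction n)
    case 0 then show ?case using ls f0 by simp
  next
    case (Suc n)
    then have "\<exists>a. a < m \<and> left_special u (f n @ [a])" using noMLS by blast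
    then show ?case unfolding fS by (rule someI_ex[THEN conjunct2])
  qed
  have lenf: "length (f n) = length w + n" for n by (induction n) (simp_all add: f0 fS)
  have fpre: "k < length (f j) \<Longrightarrow> j \<le> n \<Longrightarrow> f n ! k = f j ! k" for k j n
  proof (induction n)
    case 0 then show ?case by simp
  next
    case (Suc n)
    show ?case
    proof (cases "j = Suc n")
      case True then show ?thesis by simp
    next
      case False
      then have "j \<le> n" using Suc.prems by simp
      then have "k < length (f n)" using Suc.prems lenf by simp
      then show ?thesis using Suc.IH \<open>j \<le> n\<close> Suc.prems(1) by (simp add: fS nth_append)
    qed
  qed
  define W where "W k = f (Suc k) ! k" for k
  have Wf: "k < n \<Longrightarrow> W k = f n ! k" for k n
    unfolding W_def using fpre[of k "Suc k" n] lenf by simp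
  have mapW: "map W [0..<n] = take n (f n)" for n
    using Wf lenf by (intro nth_equalityI) auto
  have lsW: "left_special u (map W [0..<n])" for n
    using lsf[of n] ls_prefix[of "take n (f n)" "drop n (f n)"] mapW by simp
  define Q where "Q n a b \<longleftrightarrow> a # map W [0..<n] \<in> factors u \<and> b # map W [0..<n] \<in> factors u"
    for n a b
  have all: "\<forall>n. \<exists>a b. a < m \<and> b < m \<and> a \<noteq> b \<and> Q n a b"
  proof
    fix n
    obtain a b where "a \<noteq> b" "a # map W [0..<n] \<in> factors u" "b # map W [0..<n] \<in> factors u"
      using lsW[of n] unfolding left_special_def by blast
    moreover then have "a < m" "b < m" using fac_letters by fastforce+
    ultimately show "\<exists>a b. a < m \<and> b < m \<and> a \<noteq> b \<and> Q n a b" unfolding Q_def by blast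
  qed
  have anti: "Q n' a b \<Longrightarrow> n \<le> n' \<Longrightarrow> Q n a b" for n n' a b
  proof -
    assume q: "Q n' a b" and le: "n \<le> n'"
    have tk: "take (Suc n) (c # map W [0..<n']) = c # map W [0..<n]" for c
      using le by (simp add: take_map)
    have pre: "c # map W [0..<n'] \<in> factors u \<Longrightarrow> c # map W [0..<n] \<in> factors u" for c
    proof -
      assume "c # map W [0..<n'] \<in> factors u"
      then have "take (Suc n) (c # map W [0..<n']) @ drop (Suc n) (c # map W [0..<n']) \<in> factors u"
        by simp
      then have "take (Suc n) (c # map W [0..<n']) \<in> factors u" by (rule fac_prefix)
      then show ?thesis unfolding tk .
    qed
    show "Q n a b" using q pre unfolding Q_def by blast
  qed
  have "\<exists>a b. a \<noteq> b \<and> (\<forall>n. Q n a b)" by (rule pigeon[OF all anti])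
  then obtain a b where ab: "a \<noteq> b" "\<forall>n. Q n a b" by blast
  have lf: "LFa c W" if c: "\<forall>n. c # map W [0..<n] \<in> factors u" for c
    unfolding LFa_def
  proof
    fix N
    obtain i where "u i = c" "\<forall>k<N. u (Suc i + k) = W k" using c[rule_format, of N] unfolding cons_fac by auto
    then show "\<exists>q\<ge>1. u (q - 1) = c \<and> (\<forall>k<N. u (q + k) = W k)" by (intro exI[of _ "Suc i"]) auto
  qed
  have "LFa a W" "LFa b W" using lf ab(2) unfolding Q_def by auto
  then have Wu: "W k = u k" for k using branch_unique[OF ab(1)] by blast
  show ?thesis
  proof (rule nth_equalityI)
    show "length w = length (pref (length w))" by simp
    fix k assume k: "k < length w"
    have "w ! k = f (Suc k) ! k" using fpre[of k 0 "Suc k"] f0 k by simp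
    then show "w ! k = pref (length w) ! k" using Wu[of k] k W_def by simp
  qed
qed

end

context pd begin

abbreviation FF :: "nat \<Rightarrow> nat list set" where "FF n \<equiv> {w \<in> factors u. length w = n}"

lemma FF_fin: "finite (FF n)"
proof (rule finite_subset)
  show "FF n \<subseteq> {xs. set xs \<subseteq> {..<m} \<and> length xs = n}" using fac_letters by blast
  show "finite {xs. set xs \<subseteq> {..<m} \<and> length xs = n}" by (rule finite_lists_length_eq) simp
qed

lemma FF_Suc: "FF (Suc n) = (\<lambda>(w, a). a # w) ` (SIGMA w:FF n. E w)"
proof
  show "FF (Suc n) \<subseteq> (\<lambda>(w, a). a # w) ` (SIGMA w:FF n. E w)"
  proof
    fix v assume v: "v \<in> FF (Suc n)"
    then obtain a w where vw: "v = a # w" by (cases v) auto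
    have "w \<in> FF n" using v vw fac_suffix by auto
    moreover have "a \<in> E w" using v vw unfolding E_def by simp
    ultimately show "v \<in> (\<lambda>(w, a). a # w) ` (SIGMA w:FF n. E w)" using vw by force
  qed
next
  show "(\<lambda>(w, a). a # w) ` (SIGMA w:FF n. E w) \<subseteq> FF (Suc n)"
    unfolding E_def by auto
qed

lemma card_FF_Suc: "card (FF (Suc n)) = (\<Sum>w\<in>FF n. card (E w))"
proof -
  have inj: "inj_on (\<lambda>(w, a). a # w) (SIGMA w:FF n. E w)" by (auto simp: inj_on_def)
  have "card (FF (Suc n)) = card (SIGMA w:FF n. E w)"
    unfolding FF_Suc using inj by (rule card_image)
  also have "\<dots> = (\<Sum>w\<in>FF n. card (E w))" using FF_fin E_fin by (intro card_SigmaI) auto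
  finally show ?thesis .
qed

lemma E_card_pos: "w \<in> factors u \<Longrightarrow> card (E w) \<ge> 1"
  using E_nonempty E_fin by (simp add: Suc_le_eq card_gt_0_iff)

lemma card_FF_Suc2: "card (FF (Suc n)) = card (FF n) + (\<Sum>w\<in>FF n. card (E w) - 1)"
proof -
  have "(\<Sum>w\<in>FF n. card (E w)) = (\<Sum>w\<in>FF n. 1 + (card (E w) - 1))"
  proof (rule sum.cong)
    fix w assume "w \<in> FF n"
    then have "card (E w) \<ge> 1" by (intro E_card_pos) simp
    then show "card (E w) = 1 + (card (E w) - 1)" by simp
  qed simp
  also have "\<dots> = card (FF n) + (\<Sum>w\<in>FF n. card (E w) - 1)" by (simp only: sum.distrib card_eq_sum)
  finally show ?thesis using card_FF_Suc by simp
qed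

lemma FF0: "FF 0 = {[]}"
  using pref_fac[of 0] by auto

lemma card_E_pref: "card (E (pref n)) = m" using E_pref by simp

lemma pref_FF: "pref n \<in> FF n" using pref_fac by simp

lemma dir1:
  assumes noMLS: "\<forall>v. left_special u v \<longrightarrow> (\<exists>a<m. left_special u (v @ [a]))"
  shows "complexity u n = 1 + (m - 1) * n"
proof (induction n)
  case 0 then show ?case unfolding complexity_def using FF0 by simp
next
  case (Suc n)
  have z: "card (E w) - 1 = 0" if w: "w \<in> FF n - {pref n}" for w
  proof -
    have "\<not> left_special u w"
    proof
      assume "left_special u w"
      then have "w = pref (length w)" using branch_pref[OF noMLS] by blast
      then show False using w by auto
    qed
    then have "card (E w) < 2" using ls_card by simp
    then show ?thesis by simp
  qed
  have "(\<Sum>w\<in>FF n. card (E w) - 1) = (card (E (pref n)) - 1) + (\<Sum>w\<in>FF n - {pref n}. card (E w) - 1)"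
    using FF_fin pref_FF by (rule sum.remove)
  also have "(\<Sum>w\<in>FF n - {pref n}. card (E w) - 1) = 0" using z by simp
  finally have "(\<Sum>w\<in>FF n. card (E w) - 1) = m - 1" using card_E_pref by simp
  then show ?case using card_FF_Suc2[of n] Suc unfolding complexity_def by simp
qed

lemma dir2:
  assumes aff: "affine_complexity u"
  shows "\<not> (\<exists>w. maximal_left_special m u w)"
proof
  assume "\<exists>w. maximal_left_special m u w"
  then obtain w where ls: "left_special u w" and mx: "\<forall>a<m. \<not> left_special u (w @ [a])"
    unfolding maximal_left_special_def by blast
  obtain a b :: int where ab: "\<forall>n. int (complexity u n) = a * int n + b"
    using aff unfolding affine_complexity_def by blast
  define D where "D n = (\<Sum>w\<in>FF n. card (E w) - 1)" for n
  have CD: "complexity u (Suc n) = complexity u n + D n" for n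
    unfolding complexity_def D_def by (rule card_FF_Suc2)
  have Da: "int (D n) = a" for n using CD[of n] ab[rule_format, of n] ab[rule_format, of "Suc n"]
    by (simp add: algebra_simps)
  have D0: "D 0 = m - 1" unfolding D_def FF0 using card_E_pref[of 0] by simp
  define k where "k = length w"
  have wF: "w \<in> FF k" using ls fac_suffix unfolding left_special_def k_def by blast
  have wp: "w \<noteq> pref k"
  proof
    assume "w = pref k"
    then have e: "pref (Suc k) = w @ [u k]" by simp
    have "left_special u (w @ [u k])" using ls_pref[of "Suc k", unfolded e] .
    then show False using mx u_lt by blast
  qed
  have cw: "card (E w) \<ge> 2" using ls ls_card by simp
  have sub: "{pref k, w} \<subseteq> FF k" using wF pref_FF by simp
  have "(\<Sum>v\<in>{pref k, w}. card (E v) - 1) \<le> D k"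
    unfolding D_def using FF_fin sub by (intro sum_mono2) auto
  moreover have "(\<Sum>v\<in>{pref k, w}. card (E v) - 1) = (m - 1) + (card (E w) - 1)"
    using wp card_E_pref by simp
  ultimately have "D k \<ge> m" using cw len2 by simp
  moreover have "D k = m - 1" using Da[of k] Da[of 0] D0 by simp
  ultimately show False using len2 by simp
qed

end

theorem corollary5:
  fixes t :: "nat list"
  assumes "simple_parry_digits t"
  shows "affine_complexity (u_beta t) \<longleftrightarrow>
         \<not> (\<exists>w. maximal_left_special (length t) (u_beta t) w)"
proof -
  have l2: "length t \<ge> 2" and h0: "t ! 0 \<ge> 1" and hl: "last t \<ge> 1"
    using assms unfolding simple_parry_digits_def by auto
  have "t \<noteq> []" using l2 by (cases t) auto
  then have "t ! (length t - 1) \<ge> 1" using hl by (simp add: last_conv_nth)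
  then interpret pd t using l2 h0 by unfold_locales auto
  show ?thesis
  proof
    assume "affine_complexity u"
    then show "\<not> (\<exists>w. maximal_left_special m u w)" by (rule dir2)
  next
    assume nm: "\<not> (\<exists>w. maximal_left_special m u w)"
    have noMLS: "\<forall>v. left_special u v \<longrightarrow> (\<exists>a<m. left_special u (v @ [a]))"
      using nm unfolding maximal_left_special_def by blast
    have "\<forall>n. int (complexity u n) = int (m - 1) * int n + 1"
    proof
      fix n
      have "int (complexity u n) = int (1 + (m - 1) * n)" by (simp only: dir1[OF noMLS])
      also have "\<dots> = int (m - 1) * int n + 1" by (simp only: of_nat_add of_nat_mult of_nat_1 add.commute)
      finally show "int (complexity u n) = int (m - 1) * int n + 1" .
    qed
    then show "affine_complexity u" unfolding affine_complexity_def by blast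
  qed
qed

end
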